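(* Let $M$ be a finite set, let $\mathcal{X}\subseteq\mathcal{P}(M)$ be a closure system on $M$, and let $\mathcal{M}=\{N_i\mid i\in I\}\subseteq\mathcal{P}(M)$ be a consortial domain on $M$. If $\mathcal{M}^{*}:=\mathcal{M}\cup\{M\}$ is a closure system on $M$, then $\bigcup_{N\in\mathcal{M}^{*}}\mathcal{X}_N$ is a closure system on $M$.
   Context: A closure system on $M$ is a family of subsets of $M$ containing $M$ and closed under intersections. A consortial domain on $M$ is a family $\mathcal{M}=\{N_i\mid i\in I\}\subseteq\mathcal{P}(M)$ with $\bigcup_{i\in I}N_i=M$. For $N\subseteq M$, $\mathcal{X}_N:=\{X\cap N\mid X\in\mathcal{X}\}$. *)

theory Defs
  imports Main
begin

definition closure_system :: "'a set \<Rightarrow> 'a set set \<Rightarrow> bool" where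
  "closure_system M X \<longleftrightarrow> X \<subseteq> Pow M \<and> M \<in> X \<and>
     (\<forall>S. S \<subseteq> X \<longrightarrow> S \<noteq> {} \<longrightarrow> \<Inter>S \<in> X)"

definition consortial_domain :: "'a set \<Rightarrow> 'i set \<Rightarrow> ('i \<Rightarrow> 'a set) \<Rightarrow> bool" where
  "consortial_domain M I N \<longleftrightarrow> (\<forall>i\<in>I. N i \<subseteq> M) \<and> (\<Union>i\<in>I. N i) = M"

definition restrict_family :: "'a set set \<Rightarrow> 'a set \<Rightarrow> 'a set set" where
  "restrict_family X N = {A \<inter> N | A. A \<in> X}"

end

theory Submission
  imports Defs
begin

theorem mainTheorem3:
  fixes M :: "'a set" and X :: "'a set set" and I :: "'i set" and N :: "'i \<Rightarrow> 'a set"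
  assumes "finite M"
    and "closure_system M X"
    and "consortial_domain M I N"
    and "closure_system M (N ` I \<union> {M})"
  shows "closure_system M (\<Union>K \<in> N ` I \<union> {M}. restrict_family X K)"
proof -
  let ?Ms = "N ` I \<union> {M}"
  let ?F = "\<Union>K \<in> ?Ms. restrict_family X K"
  have X: "X \<subseteq> Pow M" "M \<in> X" "\<And>S. S \<subseteq> X \<Longrightarrow> S \<noteq> {} \<Longrightarrow> \<Inter>S \<in> X"
    using assms(2) unfolding closure_system_def by auto
  have K: "\<And>S. S \<subseteq> ?Ms \<Longrightarrow> S \<noteq> {} \<Longrightarrow> \<Inter>S \<in> ?Ms"
    using assms(4) unfolding closure_system_def by blast
  have memF: "s \<in> ?F \<longleftrightarrow> (\<exists>A K. A \<in> X \<and> K \<in> ?Ms \<and> s = A \<inter> K)" for s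
    unfolding restrict_family_def by blast
  have sub: "?F \<subseteq> Pow M" using X(1) unfolding restrict_family_def by blast
  have top: "M \<in> ?F" unfolding memF using X(2) by auto
  have inter: "\<Inter>S \<in> ?F" if S: "S \<subseteq> ?F" "S \<noteq> {}" for S
  proof -
    have "\<forall>s\<in>S. \<exists>p. fst p \<in> X \<and> snd p \<in> ?Ms \<and> s = fst p \<inter> snd p"
      using S(1) memF by (metis (no_types, lifting) fst_conv snd_conv subsetD)
    then obtain f where f: "\<And>s. s \<in> S \<Longrightarrow> fst (f s) \<in> X \<and> snd (f s) \<in> ?Ms \<and> s = fst (f s) \<inter> snd (f s)"
      by metis
    have eq: "\<Inter>S = \<Inter>((\<lambda>s. fst (f s)) ` S) \<inter> \<Inter>((\<lambda>s. snd (f s)) ` S)"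
    proof
      show "\<Inter>S \<subseteq> \<Inter>((\<lambda>s. fst (f s)) ` S) \<inter> \<Inter>((\<lambda>s. snd (f s)) ` S)"
        using f by blast
      show "\<Inter>((\<lambda>s. fst (f s)) ` S) \<inter> \<Inter>((\<lambda>s. snd (f s)) ` S) \<subseteq> \<Inter>S"
      proof
        fix x assume x: "x \<in> \<Inter>((\<lambda>s. fst (f s)) ` S) \<inter> \<Inter>((\<lambda>s. snd (f s)) ` S)"
        show "x \<in> \<Inter>S"
        proof
          fix s assume "s \<in> S"
          with x f[of s] show "x \<in> s" by auto
        qed
      qed
    qed
    have "\<Inter>((\<lambda>s. fst (f s)) ` S) \<in> X" by (rule X(3)) (use f S(2) in auto)
    moreover have "\<Inter>((\<lambda>s. snd (f s)) ` S) \<in> ?Ms"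
      by (rule K) (use f S(2) in auto)
    ultimately show ?thesis unfolding memF eq by blast
  qed
  show ?thesis unfolding closure_system_def using sub top inter by (intro conjI allI impI) auto
qed

end
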